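(* Let $G$ be a group with elements $A,B,C,D$ such that $A$ commutes with $B$, $B$ commutes with $C$, $C$ commutes with $D$ and $D$ commutes with $A$. If neither of the subgroups $\langle A,C\rangle$ and $\langle B,D\rangle$ is soluble, then $G$ does not embed in $GL(3,\mathbb{F})$ for any field $\mathbb{F}$. *)

theory Defs
  imports "HOL-Analysis.Analysis" "HOL-Algebra.Solvable_Groups"
begin

definition GL3 :: "('f::field ^ 3 ^ 3) monoid" where
  "GL3 = \<lparr>carrier = {M. invertible M}, mult = (\<lambda>M N. M ** N), one = mat 1\<rparr>"

definition embeds_in :: "('a, 'c) monoid_scheme \<Rightarrow> ('b, 'd) monoid_scheme \<Rightarrow> bool" where
  "embeds_in G H \<longleftrightarrow> (\<exists>h. h \<in> hom G H \<and> inj_on h (carrier G))"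

end

theory Submission
  imports Defs
begin


type_synonym 'f m3 = "'f^3^3"

lemma three_vecs:
  fixes a b c :: "'f::field^3"
  shows "(\<exists>x y z. (x,y,z) \<noteq> (0,0,0) \<and> x *s a + y *s b + z *s c = 0) \<or> (\<forall>w. \<exists>x y z. w = x *s a + y *s b + z *s c)"
proof -
  define P :: "'f^3^3" where "P = (\<chi> i j. if j = 1 then a$i else if j = 2 then b$i else c$i)"
  have Pv: "P *v v = v$1 *s a + v$2 *s b + v$3 *s c" for v
    by (simp add: P_def matrix_vector_mult_def vec_eq_iff sum_3 algebra_simps)
  show ?thesis
  proof (cases "\<forall>v. P *v v = 0 \<longrightarrow> v = 0")
    case True
    then have "invertible P" using matrix_left_invertible_ker invertible_left_inverse by blast
    then obtain Q where "P ** Q = mat 1" unfolding invertible_def by blast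
    then have "\<forall>w. P *v (Q *v w) = w" by (simp add: matrix_vector_mul_assoc)
    then show ?thesis using Pv by metis
  next
    case False
    then obtain v where v: "P *v v = 0" "v \<noteq> 0" by blast
    then have "(v$1,v$2,v$3) \<noteq> (0,0,0)" by (auto simp: vec_eq_iff forall_3)
    then show ?thesis using Pv v by metis
  qed
qed

lemma four_vecs:
  fixes a b c d :: "'f::field^3"
  shows "\<exists>x y z u. (x,y,z,u) \<noteq> (0,0,0,0) \<and> x *s a + y *s b + z *s c + u *s d = 0"
proof -
  from three_vecs[of a b c] show ?thesis
  proof
    assume "\<exists>x y z. (x,y,z) \<noteq> (0,0,0) \<and> x *s a + y *s b + z *s c = 0"
    then obtain x y z where "(x,y,z) \<noteq> (0,0,0)" "x *s a + y *s b + z *s c = 0" by blast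
    then show ?thesis by (rule_tac x=x in exI, rule_tac x=y in exI, rule_tac x=z in exI, rule_tac x=0 in exI) auto
  next
    assume "\<forall>w. \<exists>x y z. w = x *s a + y *s b + z *s c"
    then obtain x y z where "d = x *s a + y *s b + z *s c" by blast
    then show ?thesis by (rule_tac x=x in exI, rule_tac x=y in exI, rule_tac x=z in exI, rule_tac x="-1" in exI) auto
  qed
qed

definition cm :: "'f::field m3 set \<Rightarrow> 'f m3 \<Rightarrow> bool" where
  "cm S M \<longleftrightarrow> (\<forall>s\<in>S. M ** s = s ** M)"

definition ceig :: "'f::field m3 set \<Rightarrow> 'f^3 \<Rightarrow> bool" where
  "ceig S v \<longleftrightarrow> v \<noteq> 0 \<and> (\<forall>s\<in>S. \<exists>c. s *v v = c *s v)"

lemma sing_ceig: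
  fixes M :: "'f::field m3"
  assumes cm: "cm S M" and nz: "M \<noteq> 0" and ni: "\<not> invertible M"
  shows "\<exists>v. ceig S v"
proof -
  obtain v where v: "M *v v = 0" "v \<noteq> 0"
    using ni matrix_left_invertible_ker invertible_left_inverse by blast
  show ?thesis
  proof (cases "ceig S v")
    case True then show ?thesis by blast
  next
    case False
    then obtain s0 where s0: "s0 \<in> S" "\<forall>c. s0 *v v \<noteq> c *s v" using v unfolding ceig_def by blast
    define w where "w = s0 *v v"
    have Mw: "M *v w = 0" using cm s0(1) v unfolding w_def cm_def
      by (metis matrix_vector_mul_assoc matrix_vector_mult_0_right)
    obtain u0 where u0: "M *v u0 \<noteq> 0" using nz matrix_eq[of M 0] by auto
    from three_vecs[of v w u0] show ?thesis
    proof
      assume "\<exists>x y z. (x,y,z) \<noteq> (0,0,0) \<and> x *s v + y *s w + z *s u0 = 0"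
      then obtain x y z where xyz: "(x,y,z) \<noteq> (0,0,0)" "x *s v + y *s w + z *s u0 = 0" by blast
      have "M *v (x *s v + y *s w + z *s u0) = z *s (M *v u0)"
        using v Mw by (simp add: matrix_vector_right_distrib vec.scale)
      then have "z = 0" using xyz u0 by simp
      show ?thesis
      proof (cases "y = 0")
        case True
        then show ?thesis using xyz \<open>z = 0\<close> v by auto
      next
        case False
        then have "w = (- x / y) *s v" using xyz \<open>z = 0\<close>
          by (simp add: vec_eq_iff field_simps) (metis add_eq_0_iff mult.commute)
        then show ?thesis using s0 w_def by metis
      qed
    next
      assume sp: "\<forall>w'. \<exists>x y z. w' = x *s v + y *s w + z *s u0"
      define m where "m = M *v u0"
      have Mu: "\<exists>z. M *v u = z *s m" for u
      proof -
        obtain x y z where "u = x *s v + y *s w + z *s u0" using sp by blast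
        then have "M *v u = z *s m" using v Mw by (simp add: m_def matrix_vector_right_distrib vec.scale)
        then show ?thesis by blast
      qed
      have "ceig S m"
        unfolding ceig_def
      proof (intro conjI ballI)
        show "m \<noteq> 0" using u0 m_def by simp
        fix s assume "s \<in> S"
        then have "s *v m = M *v (s *v u0)" using cm unfolding cm_def m_def
          by (metis matrix_vector_mul_assoc)
        then show "\<exists>c. s *v m = c *s m" using Mu by metis
      qed
      then show ?thesis by blast
    qed
  qed
qed



lemma matc_comm: "mat c ** (A::'f::field^3^3) = A ** mat c"
  by (simp add: vec_eq_iff forall_3 sum_3 matrix_matrix_mult_def mat_def)
lemma matc_vec: "(mat c ** (A::'f::field^3^3)) *v v = c *s (A *v v)"
  by (simp add: vec_eq_iff forall_3 sum_3 matrix_matrix_mult_def matrix_vector_mult_def mat_def algebra_simps)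
lemma matc_vec': "(mat c :: 'f::field^3^3) *v v = c *s v"
  by (simp add: vec_eq_iff forall_3 sum_3 matrix_vector_mult_def mat_def)
lemma mat_eq0: "(mat c :: 'f::field^3^3) = 0 \<longleftrightarrow> c = 0"
  by (simp add: vec_eq_iff forall_3 mat_def)
lemma mat_mul_mat: "(mat p :: 'f::field^3^3) ** mat q = mat (p*q)"
  by (simp add: vec_eq_iff forall_3 sum_3 matrix_matrix_mult_def mat_def)
lemma mat_neg: "- (mat p :: 'f::field^3^3) = mat (-p)"
  by (simp add: vec_eq_iff forall_3 mat_def)

lemma mm0[simp]: "(A::'f::field m3) ** 0 = 0" "0 ** (A::'f::field m3) = 0"
  by (simp_all add: vec_eq_iff matrix_matrix_mult_def)

lemma matrix_add_rdistrib: "((A::'f::field m3) + B) ** C = A ** C + B ** C"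
  by (simp add: matrix_matrix_mult_def vec_eq_iff sum.distrib algebra_simps)

lemma cm_mat: "cm S (mat c)" by (simp add: cm_def matc_comm)
lemma cm_add: "cm S A \<Longrightarrow> cm S B \<Longrightarrow> cm S (A + B)"
  by (simp add: cm_def matrix_add_ldistrib matrix_add_rdistrib)
lemma cm_mul: "cm S A \<Longrightarrow> cm S B \<Longrightarrow> cm S (A ** B)"
  unfolding cm_def by (metis matrix_mul_assoc)

lemma scal_comm:
  fixes x y :: "'f::field m3"
  assumes "b \<noteq> 0" "mat a + mat b ** x = 0"
  shows "x ** y = y ** x"
proof -
  have "mat (1/b) ** (mat a + mat b ** x) = 0" using assms by simp
  then have "mat (a/b) + x = 0" using assms(1)
    by (simp add: matrix_add_ldistrib mat_mul_mat matrix_mul_assoc)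
  then have "x = mat (-(a/b))" by (metis add.commute add_eq_0_iff mat_neg)
  then show ?thesis by (simp add: matc_comm)
qed

lemma div_comm:
  fixes x y :: "'f::field m3"
  assumes noeig: "\<not>(\<exists>v. ceig S v)" and x: "cm S x" and y: "cm S y"
  shows "x ** y = y ** x"
proof -
  have inv: "cm S N \<Longrightarrow> N \<noteq> 0 \<Longrightarrow> invertible N" for N using sing_ceig noeig by blast
  have ker: "N = 0" if h: "cm S N" "N *v v = 0" "v \<noteq> 0" for N v
  proof (rule ccontr)
    assume "N \<noteq> 0"
    then obtain B where "B ** N = mat 1" using inv[OF h(1)] invertible_def by blast
    then have "v = B *v (N *v v)" by (simp add: matrix_vector_mul_assoc)
    then show False using h by simp
  qed
  define v :: "'f^3" where "v = axis 1 1"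
  have v0: "v \<noteq> 0" by (simp add: v_def)
  obtain \<alpha> \<beta> \<gamma> \<delta> where nz: "(\<alpha>,\<beta>,\<gamma>,\<delta>) \<noteq> (0,0,0,0)" and
    eq: "\<alpha> *s v + \<beta> *s (x *v v) + \<gamma> *s (y *v v) + \<delta> *s ((x ** y) *v v) = 0"
    using four_vecs[of v "x *v v" "y *v v" "(x ** y) *v v"] by blast
  define a where "a = mat \<alpha> + mat \<beta> ** x"
  define c where "c = mat \<gamma> + mat \<delta> ** x"
  have N: "(a + c ** y) *v v = 0" using eq
    by (simp add: a_def c_def matrix_vector_mult_add_rdistrib matc_vec matc_vec' matrix_add_rdistrib
        matrix_vector_mul_assoc add.assoc flip: matrix_mul_assoc)
  have cmN: "cm S (a + c ** y)" unfolding a_def c_def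
    by (intro cm_add cm_mul cm_mat x y)
  have N0: "a + c ** y = 0" using ker cmN N v0 by blast
  have ax: "a ** x = x ** a"
    by (simp add: a_def matrix_add_ldistrib matrix_add_rdistrib matc_comm[of \<alpha> x]) (metis matc_comm matrix_mul_assoc)
  have cx: "c ** x = x ** c"
    by (simp add: c_def matrix_add_ldistrib matrix_add_rdistrib matc_comm[of \<gamma> x]) (metis matc_comm matrix_mul_assoc)
  show ?thesis
  proof (cases "c = 0")
    case True
    show ?thesis
    proof (cases "\<delta> = 0")
      case False
      show ?thesis by (rule scal_comm[of \<delta> \<gamma>]) (use True False c_def in auto)
    next
      case d0: True
      then have "\<gamma> = 0" using True c_def mat_eq0 by auto
      then have "a = 0" using N0 True by simp
      show ?thesis
      proof (cases "\<beta> = 0")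
        case False
        show ?thesis by (rule scal_comm[of \<beta> \<alpha>]) (use \<open>a = 0\<close> False a_def in auto)
      next
        case True
        then have "\<alpha> = 0" using \<open>a = 0\<close> a_def mat_eq0 by auto
        then show ?thesis using nz True d0 \<open>\<gamma> = 0\<close> by simp
      qed
    qed
  next
    case False
    have cmc: "cm S c" unfolding c_def by (intro cm_add cm_mul cm_mat x)
    then have "invertible c" using inv False by blast
    then obtain ci where ci: "ci ** c = mat 1" unfolding invertible_def by blast
    have cy: "c ** y + a = 0" using N0 by (simp add: add.commute)
    have "c ** (x ** y) + x ** a = 0"
    proof -
      have "c ** (x ** y) + x ** a = x ** (c ** y + a)"
        by (simp add: matrix_add_ldistrib cx matrix_mul_assoc)
      then show ?thesis using cy by simp
    qed
    moreover have "c ** (y ** x) + a ** x = 0"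
    proof -
      have "c ** (y ** x) + a ** x = (c ** y + a) ** x"
        by (simp add: matrix_add_rdistrib matrix_mul_assoc)
      then show ?thesis using cy by simp
    qed
    ultimately have "c ** (x ** y) = c ** (y ** x)" using ax by (metis add_right_cancel)
    then have "ci ** (c ** (x ** y)) = ci ** (c ** (y ** x))" by simp
    then show ?thesis by (simp add: ci matrix_mul_assoc)
  qed
qed



lemma GL3_carrier[simp]: "carrier (GL3::'f::field m3 monoid) = {M. invertible M}"
  by (simp add: GL3_def)
lemma GL3_mult[simp]: "(x::'f::field m3) \<otimes>\<^bsub>GL3\<^esub> y = x ** y"
  by (simp add: GL3_def)
lemma GL3_one[simp]: "\<one>\<^bsub>GL3::'f::field m3 monoid\<^esub> = mat 1"
  by (simp add: GL3_def)

lemma invertible_mat1: "invertible (mat 1 :: 'f::field m3)"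
  unfolding invertible_def by (rule exI[of _ "mat 1"]) simp

lemma GL3_group: "group (GL3::'f::field m3 monoid)"
proof (rule groupI)
  show "x \<otimes>\<^bsub>GL3\<^esub> y \<in> carrier GL3" if "x \<in> carrier GL3" "y \<in> carrier GL3" for x y :: "'f m3"
    using that invertible_mult by auto
  show "\<one>\<^bsub>GL3\<^esub> \<in> carrier (GL3::'f::field m3 monoid)" using invertible_mat1 by simp
  show "x \<otimes>\<^bsub>GL3\<^esub> y \<otimes>\<^bsub>GL3\<^esub> z = x \<otimes>\<^bsub>GL3\<^esub> (y \<otimes>\<^bsub>GL3\<^esub> z)" for x y z :: "'f m3"
    by (simp add: matrix_mul_assoc)
  show "\<one>\<^bsub>GL3\<^esub> \<otimes>\<^bsub>GL3\<^esub> x = x" for x :: "'f m3" by simp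
  show "\<exists>y\<in>carrier GL3. y \<otimes>\<^bsub>GL3\<^esub> x = \<one>\<^bsub>GL3\<^esub>" if "x \<in> carrier GL3" for x :: "'f m3"
  proof -
    have "invertible x" using that by simp
    then obtain y where "x ** y = mat 1" "y ** x = mat 1" unfolding invertible_def by blast
    then have "invertible y" unfolding invertible_def by blast
    then show ?thesis using \<open>y ** x = mat 1\<close> by auto
  qed
qed

lemma GL3_inv:
  fixes x :: "'f::field m3"
  assumes "invertible x"
  shows "x ** inv\<^bsub>GL3\<^esub> x = mat 1" "inv\<^bsub>GL3\<^esub> x ** x = mat 1" "invertible (inv\<^bsub>GL3\<^esub> x)"
  using group.r_inv[OF GL3_group, of x] group.l_inv[OF GL3_group, of x] group.inv_closed[OF GL3_group, of x] assms
  by auto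

lemma solv_of_derived:
  assumes "group G" "subgroup H G" "(derived G ^^ n) H = {\<one>\<^bsub>G\<^esub>}"
  shows "solvable (G\<lparr>carrier := H\<rparr>)"
proof -
  interpret group G by fact
  have gH: "group (G\<lparr>carrier := H\<rparr>)" using subgroup_imp_group assms(2) by blast
  have sub: "(derived G ^^ m) H \<subseteq> H" for m
    by (induction m) (simp_all add: derived_incl[OF _ assms(2)])
  have eq: "(derived (G\<lparr>carrier := H\<rparr>) ^^ m) H = (derived G ^^ m) H" for m
  proof (induction m)
    case (Suc m)
    then show ?case using derived_consistent[OF sub[of m] assms(2)] by simp
  qed simp
  show ?thesis
    unfolding group.solvable_iff_trivial_derived_seq[OF gH]
    using eq assms(3) by auto
qed

lemma (in group) derived_sub:
  assumes "H \<subseteq> carrier G" "subgroup K G"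
    "\<And>a b. a \<in> H \<Longrightarrow> b \<in> H \<Longrightarrow> a \<otimes> b \<otimes> inv a \<otimes> inv b \<in> K"
  shows "derived G H \<subseteq> K"
  unfolding derived_def by (rule generate_subgroup_incl) (use assms in auto)

lemma (in group) comm_commutator:
  assumes "a \<in> carrier G" "b \<in> carrier G" "a \<otimes> b = b \<otimes> a"
  shows "a \<otimes> b \<otimes> inv a \<otimes> inv b = \<one>"
  using assms by (simp add: m_assoc)

definition lt0 :: "'f::field m3 \<Rightarrow> bool" where "lt0 x \<longleftrightarrow> x$2$1 = 0 \<and> x$3$1 = 0"
definition ut :: "'f::field m3 \<Rightarrow> bool" where "ut x \<longleftrightarrow> lt0 x \<and> x$3$2 = 0"
definition U1 :: "'f::field m3 set" where
  "U1 = {x. invertible x \<and> ut x \<and> x$1$1 = 1 \<and> x$2$2 = 1 \<and> x$3$3 = 1}"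
definition V1 :: "'f::field m3 set" where
  "V1 = {x. invertible x \<and> lt0 x \<and> x$1$1 = 1 \<and> x$2$2 = 1 \<and> x$2$3 = 0 \<and> x$3$2 = 0 \<and> x$3$3 = 1}"

lemma entry_eq: "A = B \<Longrightarrow> A$i$j = B$i$j" by simp

lemma lt0_inv:
  fixes x y :: "'f::field m3"
  assumes "y ** x = mat 1" "lt0 x"
  shows "lt0 y \<and> y$1$1 * x$1$1 = 1"
proof -
  have e: "(y ** x)$i$j = (mat 1 :: 'f m3)$i$j" for i j using assms by simp
  note e11 = e[of 1 1] and e21 = e[of 2 1] and e31 = e[of 3 1]
  show ?thesis using e11 e21 e31 assms(2)
    by (auto simp: lt0_def matrix_matrix_mult_def sum_3 mat_def)
qed

lemma ut_inv:
  fixes x y :: "'f::field m3"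
  assumes "y ** x = mat 1" "ut x"
  shows "ut y \<and> y$1$1 * x$1$1 = 1 \<and> y$2$2 * x$2$2 = 1 \<and> y$3$3 * x$3$3 = 1"
proof -
  have e: "(y ** x)$i$j = (mat 1 :: 'f m3)$i$j" for i j using assms by simp
  have l: "lt0 y" "y$1$1 * x$1$1 = 1" using lt0_inv assms ut_def by auto
  note e22 = e[of 2 2] and e32 = e[of 3 2] and e33 = e[of 3 3]
  show ?thesis using l e22 e32 e33 assms(2)
    by (auto simp: ut_def lt0_def matrix_matrix_mult_def sum_3 mat_def)
qed

lemma lt0_mult: "lt0 x \<Longrightarrow> lt0 y \<Longrightarrow> lt0 (x ** y)"
  by (simp add: lt0_def matrix_matrix_mult_def sum_3)
lemma ut_mult: "ut x \<Longrightarrow> ut y \<Longrightarrow> ut (x ** y)"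
  by (simp add: ut_def lt0_def matrix_matrix_mult_def sum_3)
lemma lt0_mult11: "lt0 y \<Longrightarrow> (x ** y)$1$1 = x$1$1 * y$1$1"
  by (simp add: lt0_def matrix_matrix_mult_def sum_3)
lemma ut_mult_diag: "ut x \<Longrightarrow> ut y \<Longrightarrow> (x ** y)$2$2 = x$2$2 * y$2$2 \<and> (x ** y)$3$3 = x$3$3 * y$3$3"
  by (simp add: ut_def lt0_def matrix_matrix_mult_def sum_3)

lemma V1_inv:
  fixes x y :: "'f::field m3"
  assumes "y ** x = mat 1" "lt0 x" "x$1$1 = 1" "x$2$2 = 1" "x$2$3 = 0" "x$3$2 = 0" "x$3$3 = 1"
  shows "lt0 y \<and> y$1$1 = 1 \<and> y$2$2 = 1 \<and> y$2$3 = 0 \<and> y$3$2 = 0 \<and> y$3$3 = 1"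
proof -
  have e: "(y ** x)$i$j = (mat 1 :: 'f m3)$i$j" for i j using assms by simp
  have l: "lt0 y" "y$1$1 * x$1$1 = 1" using lt0_inv[OF assms(1,2)] by auto
  note e22 = e[of 2 2] and e23 = e[of 2 3] and e32 = e[of 3 2] and e33 = e[of 3 3]
  show ?thesis using l e22 e23 e32 e33 assms
    by (auto simp: lt0_def matrix_matrix_mult_def sum_3 mat_def)
qed

lemma V1_subgroup: "subgroup (V1::'f::field m3 set) GL3"
proof (rule group.subgroupI[OF GL3_group])
  show "V1 \<subseteq> carrier (GL3::'f m3 monoid)" by (auto simp: V1_def)
  show "V1 \<noteq> ({}::'f m3 set)" using invertible_mat1
    by (auto simp: V1_def lt0_def mat_def intro!: exI[of _ "mat 1"])
  show "inv\<^bsub>GL3\<^esub> a \<in> V1" if "a \<in> V1" for a :: "'f m3"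
    using that GL3_inv[of a] V1_inv[of "inv\<^bsub>GL3\<^esub> a" a] by (auto simp: V1_def)
  show "a \<otimes>\<^bsub>GL3\<^esub> b \<in> V1" if "a \<in> V1" "b \<in> V1" for a b :: "'f m3"
  proof -
    have "invertible (a ** b)" using that invertible_mult by (auto simp: V1_def)
    then show ?thesis using that by (auto simp: V1_def lt0_def matrix_matrix_mult_def sum_3)
  qed
qed



lemma ut_mult23: "ut x \<Longrightarrow> ut y \<Longrightarrow> (x ** y)$2$3 = x$2$2 * y$2$3 + x$2$3 * y$3$3"
  by (simp add: ut_def lt0_def matrix_matrix_mult_def sum_3)

lemma ut4_diag:
  fixes a b c d :: "'f::field m3"
  assumes "ut a" "ut b" "ut c" "ut d"
  shows "(a**b**c**d)$1$1 = a$1$1*b$1$1*c$1$1*d$1$1"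
        "(a**b**c**d)$2$2 = a$2$2*b$2$2*c$2$2*d$2$2"
        "(a**b**c**d)$3$3 = a$3$3*b$3$3*c$3$3*d$3$3"
proof -
  have u: "ut (a**b)" "ut (a**b**c)" using assms ut_mult by blast+
  show "(a**b**c**d)$1$1 = a$1$1*b$1$1*c$1$1*d$1$1"
    using assms u by (simp add: lt0_mult11 ut_def)
  show "(a**b**c**d)$2$2 = a$2$2*b$2$2*c$2$2*d$2$2"
    using assms u by (simp add: ut_mult_diag)
  show "(a**b**c**d)$3$3 = a$3$3*b$3$3*c$3$3*d$3$3"
    using assms u by (simp add: ut_mult_diag)
qed

lemma u4_23:
  fixes a b c d :: "'f::field m3"
  assumes "ut a" "ut b" "ut c" "ut d"
    "a$2$2 = 1" "b$2$2 = 1" "c$2$2 = 1" "d$2$2 = 1" "a$3$3 = 1" "b$3$3 = 1" "c$3$3 = 1" "d$3$3 = 1"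
  shows "(a**b**c**d)$2$3 = a$2$3+b$2$3+c$2$3+d$2$3"
proof -
  have u: "ut (a**b)" "ut (a**b**c)" using assms ut_mult by blast+
  show ?thesis using assms u by (simp add: ut_mult23 ut_mult_diag)
qed

lemma U1_subgroup: "subgroup (U1::'f::field m3 set) GL3"
proof (rule group.subgroupI[OF GL3_group])
  show "U1 \<subseteq> carrier (GL3::'f m3 monoid)" by (auto simp: U1_def)
  show "U1 \<noteq> ({}::'f m3 set)" using invertible_mat1
    by (auto simp: U1_def ut_def lt0_def mat_def intro!: exI[of _ "mat 1"])
  show "inv\<^bsub>GL3\<^esub> a \<in> U1" if "a \<in> U1" for a :: "'f m3"
    using that GL3_inv[of a] ut_inv[of "inv\<^bsub>GL3\<^esub> a" a] by (auto simp: U1_def)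
  show "a \<otimes>\<^bsub>GL3\<^esub> b \<in> U1" if "a \<in> U1" "b \<in> U1" for a b :: "'f m3"
  proof -
    have "invertible (a ** b)" using that invertible_mult by (auto simp: U1_def)
    then show ?thesis using that ut_mult[of a b] ut_mult_diag[of a b] lt0_mult11[of b a]
      by (auto simp: U1_def ut_def)
  qed
qed

lemma D1:
  assumes "\<forall>a\<in>S. invertible a \<and> ut (a::'f::field m3)"
  shows "derived GL3 S \<subseteq> U1"
proof (rule group.derived_sub[OF GL3_group])
  show "S \<subseteq> carrier GL3" using assms by auto
  show "subgroup U1 (GL3::'f m3 monoid)" by (rule U1_subgroup)
  fix a b assume ab: "a \<in> S" "b \<in> S"
  define ia where "ia = inv\<^bsub>GL3\<^esub> a"
  define ib where "ib = inv\<^bsub>GL3\<^esub> b"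
  have ia: "ia ** a = mat 1" "invertible ia" using GL3_inv[of a] ab assms ia_def by auto
  have ib: "ib ** b = mat 1" "invertible ib" using GL3_inv[of b] ab assms ib_def by auto
  have ua: "ut a" "ut b" using ab assms by auto
  have uia: "ut ia \<and> ia$1$1 * a$1$1 = 1 \<and> ia$2$2 * a$2$2 = 1 \<and> ia$3$3 * a$3$3 = 1"
    using ut_inv[OF ia(1) ua(1)] .
  have uib: "ut ib \<and> ib$1$1 * b$1$1 = 1 \<and> ib$2$2 * b$2$2 = 1 \<and> ib$3$3 * b$3$3 = 1"
    using ut_inv[OF ib(1) ua(2)] .
  have ab': "invertible a" "invertible b" using ab assms by auto
  have inv: "invertible (a ** b ** ia ** ib)"
    by (rule invertible_mult[OF invertible_mult[OF invertible_mult[OF ab'] ia(2)] ib(2)])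
  have ut: "ut (a ** b ** ia ** ib)" using ua uia uib ut_mult by blast
  have d: "(a**b**ia**ib)$1$1 = (ia$1$1 * a$1$1) * (ib$1$1 * b$1$1)"
          "(a**b**ia**ib)$2$2 = (ia$2$2 * a$2$2) * (ib$2$2 * b$2$2)"
          "(a**b**ia**ib)$3$3 = (ia$3$3 * a$3$3) * (ib$3$3 * b$3$3)"
    unfolding ut4_diag[of a b ia ib, OF ua conjunct1[OF uia] conjunct1[OF uib]] by (simp_all add: mult_ac)
  have "a ** b ** ia ** ib \<in> U1" using inv ut d uia uib by (simp add: U1_def)
  then show "a \<otimes>\<^bsub>GL3\<^esub> b \<otimes>\<^bsub>GL3\<^esub> inv\<^bsub>GL3\<^esub> a \<otimes>\<^bsub>GL3\<^esub> inv\<^bsub>GL3\<^esub> b \<in> U1"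
    by (simp only: GL3_mult ia_def ib_def)
qed

lemma D2: "derived GL3 (U1::'f::field m3 set) \<subseteq> V1"
proof (rule group.derived_sub[OF GL3_group])
  show "U1 \<subseteq> carrier (GL3::'f m3 monoid)" by (auto simp: U1_def)
  show "subgroup V1 (GL3::'f m3 monoid)" by (rule V1_subgroup)
  fix a b :: "'f m3" assume ab: "a \<in> U1" "b \<in> U1"
  define ia where "ia = inv\<^bsub>GL3\<^esub> a"
  define ib where "ib = inv\<^bsub>GL3\<^esub> b"
  have iaU: "ia \<in> U1" "ib \<in> U1" using ab group.subgroupE(3)[OF GL3_group U1_subgroup] ia_def ib_def by auto
  have ia: "ia ** a = mat 1" using GL3_inv[of a] ab ia_def by (auto simp: U1_def)
  have ib: "ib ** b = mat 1" using GL3_inv[of b] ab ib_def by (auto simp: U1_def)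
  have e1: "(ia ** a)$2$3 = ia$2$3 + a$2$3" using iaU ab
    by (simp add: U1_def ut_def lt0_def matrix_matrix_mult_def sum_3)
  have e2: "(ib ** b)$2$3 = ib$2$3 + b$2$3" using iaU ab
    by (simp add: U1_def ut_def lt0_def matrix_matrix_mult_def sum_3)
  have s1: "ia$2$3 + a$2$3 = 0" using e1 ia by (simp add: mat_def)
  have s2: "ib$2$3 + b$2$3 = 0" using e2 ib by (simp add: mat_def)
  let ?c = "a ** b ** ia ** ib"
  have ab': "invertible a" "invertible b" "invertible ia" "invertible ib" using ab iaU by (auto simp: U1_def)
  have inv: "invertible ?c"
    by (rule invertible_mult[OF invertible_mult[OF invertible_mult[OF ab'(1,2)] ab'(3)] ab'(4)])
  have ut: "ut ?c" using ab iaU ut_mult by (auto simp: U1_def)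
  have d: "?c$1$1 = 1" "?c$2$2 = 1" "?c$3$3 = 1"
    using ut4_diag[of a b ia ib] ab iaU by (auto simp: U1_def)
  have c23': "?c$2$3 = (ia$2$3 + a$2$3) + (ib$2$3 + b$2$3)"
    using u4_23[of a b ia ib] ab iaU by (auto simp: U1_def algebra_simps)
  have c23: "?c$2$3 = 0" using c23' s1 s2 by simp
  have "?c \<in> V1" using inv ut d c23 by (auto simp: V1_def ut_def)
  then show "a \<otimes>\<^bsub>GL3\<^esub> b \<otimes>\<^bsub>GL3\<^esub> inv\<^bsub>GL3\<^esub> a \<otimes>\<^bsub>GL3\<^esub> inv\<^bsub>GL3\<^esub> b \<in> V1"
    by (simp only: GL3_mult ia_def ib_def)
qed

lemma V1_comm: "a \<in> V1 \<Longrightarrow> b \<in> V1 \<Longrightarrow> a ** b = b ** (a::'f::field m3)"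
  by (simp add: V1_def lt0_def vec_eq_iff forall_3 matrix_matrix_mult_def sum_3 add.commute)

lemma D3: "derived GL3 (V1::'f::field m3 set) \<subseteq> {mat 1}"
proof -
  have "derived GL3 (V1::'f::field m3 set) \<subseteq> {\<one>\<^bsub>GL3\<^esub>}"
  proof (rule group.derived_sub[OF GL3_group])
    show "V1 \<subseteq> carrier (GL3::'f m3 monoid)" by (auto simp: V1_def)
    show "subgroup {\<one>\<^bsub>GL3\<^esub>} (GL3::'f m3 monoid)" by (rule group.triv_subgroup[OF GL3_group])
    fix a b :: "'f m3" assume ab: "a \<in> V1" "b \<in> V1"
    show "a \<otimes>\<^bsub>GL3\<^esub> b \<otimes>\<^bsub>GL3\<^esub> inv\<^bsub>GL3\<^esub> a \<otimes>\<^bsub>GL3\<^esub> inv\<^bsub>GL3\<^esub> b \<in> {\<one>\<^bsub>GL3\<^esub>}"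
      using group.comm_commutator[OF GL3_group, of a b] ab V1_comm[OF ab] by (auto simp: V1_def)
  qed
  then show ?thesis by simp
qed

lemma UT_solvable:
  assumes "subgroup S (GL3::'f::field m3 monoid)" "\<forall>a\<in>S. ut a"
  shows "solvable (GL3\<lparr>carrier := S\<rparr>)"
proof (rule solv_of_derived[OF GL3_group assms(1), of 3])
  interpret G: group "GL3::'f m3 monoid" by (rule GL3_group)
  have Sc: "\<forall>a\<in>S. invertible a \<and> ut a" using assms subgroup.subset by fastforce
  have "(derived GL3 ^^ 3) S = derived GL3 (derived GL3 (derived GL3 S))"
    by (simp add: numeral_3_eq_3)
  also have "\<dots> \<subseteq> derived GL3 (derived GL3 U1)"
    using G.mono_derived[OF G.mono_derived[OF D1[OF Sc]]] .
  also have "\<dots> \<subseteq> derived GL3 V1" using G.mono_derived[OF D2] .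
  also have "\<dots> \<subseteq> {mat 1}" by (rule D3)
  finally have "(derived GL3 ^^ 3) S \<subseteq> {\<one>\<^bsub>GL3\<^esub>}" by simp
  moreover have "\<one>\<^bsub>GL3\<^esub> \<in> (derived GL3 ^^ 3) S"
    using subgroup.one_closed[OF G.exp_of_derived_is_subgroup[OF assms(1)]] .
  ultimately show "(derived GL3 ^^ 3) S = {\<one>\<^bsub>GL3\<^esub>}" by blast
qed



definition blk :: "'f::field m3 \<Rightarrow> 'f m3" where
  "blk x = (\<chi> i j. if i = 1 \<or> j = 1 then 0 else x$i$j)"

lemma blk_mult: "lt0 x \<Longrightarrow> blk (x ** y) = blk x ** blk (y::'f::field m3)"
  by (simp add: blk_def lt0_def vec_eq_iff forall_3 matrix_matrix_mult_def sum_3)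

lemma blk_J: "blk (mat 1) ** blk (mat 1::'f::field m3) = blk (mat 1)"
  by (simp add: blk_def mat_def vec_eq_iff forall_3 matrix_matrix_mult_def sum_3)

lemma blk_entries: "blk x $ 2 $ 2 = x$2$2" "blk x $ 2 $ 3 = x$2$3" "blk x $ 3 $ 2 = x$3$2" "blk x $ 3 $ 3 = x$3$3"
  by (simp_all add: blk_def)

lemma D4:
  assumes S: "subgroup S (GL3::'f::field m3 monoid)" and l: "\<forall>a\<in>S. lt0 a"
    and bc: "\<forall>a\<in>S. \<forall>b\<in>S. blk a ** blk b = blk b ** blk a"
  shows "derived GL3 S \<subseteq> V1"
proof (rule group.derived_sub[OF GL3_group])
  show "S \<subseteq> carrier GL3" using subgroup.subset[OF S] .
  show "subgroup V1 (GL3::'f m3 monoid)" by (rule V1_subgroup)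
  fix a b assume ab: "a \<in> S" "b \<in> S"
  define ia where "ia = inv\<^bsub>GL3\<^esub> a"
  define ib where "ib = inv\<^bsub>GL3\<^esub> b"
  have iS: "ia \<in> S" "ib \<in> S" using ab subgroup.m_inv_closed[OF S] ia_def ib_def by auto
  have ab': "invertible a" "invertible b" using ab subgroup.subset[OF S] by auto
  have ia: "ia ** a = mat 1" "a ** ia = mat 1" "invertible ia" using GL3_inv[OF ab'(1)] ia_def by auto
  have ib: "ib ** b = mat 1" "b ** ib = mat 1" "invertible ib" using GL3_inv[OF ab'(2)] ib_def by auto
  have la: "lt0 a" "lt0 b" "lt0 ia" "lt0 ib" using l ab iS by auto
  have lab: "lt0 (a ** b)" "lt0 (a ** b ** ia)" using la lt0_mult by blast+
  let ?c = "a ** b ** ia ** ib"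
  have inv: "invertible ?c"
    by (rule invertible_mult[OF invertible_mult[OF invertible_mult[OF ab'] ia(3)] ib(3)])
  have lc: "lt0 ?c" using lab la lt0_mult by blast
  have c11: "?c$1$1 = (ia$1$1 * a$1$1) * (ib$1$1 * b$1$1)"
    using la by (simp add: lt0_mult11 mult_ac)
  have i11: "ia$1$1 * a$1$1 = 1" "ib$1$1 * b$1$1 = 1" using lt0_inv ia ib la by blast+
  have "blk ?c = blk a ** blk b ** blk ia ** blk ib"
    using la lab by (simp add: blk_mult)
  also have "\<dots> = blk a ** (blk b ** blk ia) ** blk ib" by (simp add: matrix_mul_assoc)
  also have "\<dots> = blk a ** (blk ia ** blk b) ** blk ib" using bc ab iS by metis
  also have "\<dots> = blk (a ** ia) ** blk (b ** ib)" using la by (simp add: blk_mult matrix_mul_assoc)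
  also have "\<dots> = blk (mat 1)" using ia ib blk_J by simp
  finally have bcm: "blk ?c = blk (mat 1)" .
  have "?c$2$2 = 1" "?c$2$3 = 0" "?c$3$2 = 0" "?c$3$3 = 1"
    using bcm[THEN entry_eq, of 2 2] bcm[THEN entry_eq, of 2 3] bcm[THEN entry_eq, of 3 2] bcm[THEN entry_eq, of 3 3]
    by (simp_all add: blk_entries mat_def)
  then have "?c \<in> V1" using inv lc c11 i11 by (simp add: V1_def)
  then show "a \<otimes>\<^bsub>GL3\<^esub> b \<otimes>\<^bsub>GL3\<^esub> inv\<^bsub>GL3\<^esub> a \<otimes>\<^bsub>GL3\<^esub> inv\<^bsub>GL3\<^esub> b \<in> V1"
    by (simp only: GL3_mult ia_def ib_def)
qed

lemma BLK_solvable: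
  assumes S: "subgroup S (GL3::'f::field m3 monoid)" and l: "\<forall>a\<in>S. lt0 a"
    and bc: "\<forall>a\<in>S. \<forall>b\<in>S. blk a ** blk b = blk b ** blk a"
  shows "solvable (GL3\<lparr>carrier := S\<rparr>)"
proof (rule solv_of_derived[OF GL3_group S, of 2])
  interpret G: group "GL3::'f m3 monoid" by (rule GL3_group)
  have "(derived GL3 ^^ 2) S = derived GL3 (derived GL3 S)"
    by (simp add: numeral_2_eq_2)
  also have "\<dots> \<subseteq> derived GL3 V1"
    using G.mono_derived[OF D4[OF assms]] .
  also have "\<dots> \<subseteq> {mat 1}" by (rule D3)
  finally have "(derived GL3 ^^ 2) S \<subseteq> {\<one>\<^bsub>GL3\<^esub>}" by simp
  moreover have "\<one>\<^bsub>GL3\<^esub> \<in> (derived GL3 ^^ 2) S"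
    using subgroup.one_closed[OF G.exp_of_derived_is_subgroup[OF S]] .
  ultimately show "(derived GL3 ^^ 2) S = {\<one>\<^bsub>GL3\<^esub>}" by blast
qed

lemma prop_lemma:
  fixes p1 p2 p3 p4 q1 q2 q3 q4 :: "'f::field"
  assumes ns: "p1 \<noteq> p4 \<or> p2 \<noteq> 0 \<or> p3 \<noteq> 0"
    and E1: "p2*q3 = q2*p3" and E2: "q2*(p1-p4) = p2*(q1-q4)" and E3: "p3*(q1-q4) = q3*(p1-p4)"
  shows "\<exists>l. q2 = l*p2 \<and> q3 = l*p3 \<and> q1 = q4 + l*(p1-p4)"
proof (cases "p2 = 0")
  case False
  show ?thesis
  proof (intro exI[of _ "q2/p2"] conjI)
    show "q2 = q2 / p2 * p2" using False by simp
    show "q3 = q2 / p2 * p3" using False E1 by (simp add: field_simps)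
    show "q1 = q4 + q2 / p2 * (p1 - p4)" using False E2 by (simp add: field_simps)
  qed
next
  case p2: True
  show ?thesis
  proof (cases "p3 = 0")
    case False
    show ?thesis
    proof (intro exI[of _ "q3/p3"] conjI)
      show "q2 = q3 / p3 * p2" using False E1 p2 by simp
      show "q3 = q3 / p3 * p3" using False by simp
      show "q1 = q4 + q3 / p3 * (p1 - p4)" using False E3 by (simp add: field_simps)
    qed
  next
    case p3: True
    then have d: "p1 - p4 \<noteq> 0" using ns p2 by simp
    show ?thesis
    proof (intro exI[of _ "(q1-q4)/(p1-p4)"] conjI)
      show "q2 = (q1-q4)/(p1-p4) * p2" using d E2 p2 by simp
      show "q3 = (q1-q4)/(p1-p4) * p3" using d E3 p3 by simp
      show "q1 = q4 + (q1-q4)/(p1-p4) * (p1 - p4)" using d by simp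
    qed
  qed
qed



lemma blk_eqs:
  fixes p q :: "'f::field m3"
  assumes h: "blk q ** blk p = blk p ** blk q"
  shows "p$2$3 * q$3$2 = q$2$3 * p$3$2"
    "q$2$3 * (p$2$2 - p$3$3) = p$2$3 * (q$2$2 - q$3$3)"
    "p$3$2 * (q$2$2 - q$3$3) = q$3$2 * (p$2$2 - p$3$3)"
proof -
  have h22: "(blk q ** blk p)$2$2 = (blk p ** blk q)$2$2" using h by simp
  have h23: "(blk q ** blk p)$2$3 = (blk p ** blk q)$2$3" using h by simp
  have h32: "(blk q ** blk p)$3$2 = (blk p ** blk q)$3$2" using h by simp
  show "p$2$3 * q$3$2 = q$2$3 * p$3$2" using h22
    by (simp add: blk_def matrix_matrix_mult_def sum_3 algebra_simps)
  show "q$2$3 * (p$2$2 - p$3$3) = p$2$3 * (q$2$2 - q$3$3)" using h23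
    by (simp add: blk_def matrix_matrix_mult_def sum_3 algebra_simps)
  show "p$3$2 * (q$2$2 - q$3$3) = q$3$2 * (p$2$2 - p$3$3)" using h32
    by (simp add: blk_def matrix_matrix_mult_def sum_3 algebra_simps)
qed

lemma blk_central:
  fixes p q r :: "'f::field m3"
  assumes ns: "p$2$2 \<noteq> p$3$3 \<or> p$2$3 \<noteq> 0 \<or> p$3$2 \<noteq> 0"
    and hq: "blk q ** blk p = blk p ** blk q" and hr: "blk r ** blk p = blk p ** blk r"
  shows "blk q ** blk r = blk r ** blk q"
proof -
  obtain l where l: "q$2$3 = l*p$2$3" "q$3$2 = l*p$3$2" "q$2$2 = q$3$3 + l*(p$2$2-p$3$3)"
    using prop_lemma[OF ns blk_eqs[OF hq]] by blast
  obtain m where m: "r$2$3 = m*p$2$3" "r$3$2 = m*p$3$2" "r$2$2 = r$3$3 + m*(p$2$2-p$3$3)"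
    using prop_lemma[OF ns blk_eqs[OF hr]] by blast
  show ?thesis
    by (simp add: vec_eq_iff forall_3 blk_def matrix_matrix_mult_def sum_3 l m algebra_simps)
qed

lemma case3:
  assumes S: "subgroup S (GL3::'f::field m3 monoid)" and T: "subgroup T (GL3::'f::field m3 monoid)"
    and comm: "\<forall>a\<in>S. \<forall>b\<in>T. a ** b = b ** a" and lS: "\<forall>a\<in>S. lt0 a" and lT: "\<forall>b\<in>T. lt0 b"
  shows "solvable (GL3\<lparr>carrier := S\<rparr>) \<or> solvable (GL3\<lparr>carrier := T\<rparr>)"
proof (cases "\<forall>s\<in>S. s$2$2 = s$3$3 \<and> s$2$3 = 0 \<and> s$3$2 = 0")
  case True
  have "\<forall>a\<in>S. \<forall>b\<in>S. blk a ** blk b = blk b ** blk a"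
  proof (intro ballI)
    fix a b assume "a \<in> S" "b \<in> S"
    then have "a$2$2 = a$3$3 \<and> a$2$3 = 0 \<and> a$3$2 = 0" "b$2$2 = b$3$3 \<and> b$2$3 = 0 \<and> b$3$2 = 0"
      using True by auto
    then show "blk a ** blk b = blk b ** blk a"
      by (simp add: vec_eq_iff forall_3 blk_def matrix_matrix_mult_def sum_3 mult.commute)
  qed
  then show ?thesis using BLK_solvable[OF S lS] by blast
next
  case False
  then obtain s0 where s0: "s0 \<in> S" "s0$2$2 \<noteq> s0$3$3 \<or> s0$2$3 \<noteq> 0 \<or> s0$3$2 \<noteq> 0" by blast
  have c: "blk t ** blk s0 = blk s0 ** blk t" if "t \<in> T" for t
  proof -
    have "blk t ** blk s0 = blk (t ** s0)" using lT that blk_mult by metis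
    also have "\<dots> = blk (s0 ** t)" using comm s0(1) that by metis
    also have "\<dots> = blk s0 ** blk t" using lS s0(1) blk_mult by metis
    finally show ?thesis .
  qed
  have "\<forall>a\<in>T. \<forall>b\<in>T. blk a ** blk b = blk b ** blk a"
    using blk_central[OF s0(2)] c by blast
  then show ?thesis using BLK_solvable[OF T lT] by blast
qed



lemma solv_transfer:
  assumes G: "group G" and H: "group H" and h: "h \<in> hom G H" and K: "subgroup K G"
    and inj: "inj_on h K" and sol: "solvable (H\<lparr>carrier := h ` K\<rparr>)"
  shows "solvable (G\<lparr>carrier := K\<rparr>)"
proof -
  interpret gh: group_hom G H h by (simp add: group_hom_def group_hom_axioms_def G H h)
  have img: "subgroup (h ` K) H" by (rule gh.subgroup_img_is_subgroup[OF K])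
  have g1: "group (G\<lparr>carrier := K\<rparr>)" using group.subgroup_imp_group[OF G K] .
  have g2: "group (H\<lparr>carrier := h ` K\<rparr>)" using group.subgroup_imp_group[OF H img] .
  have hh: "h \<in> hom (G\<lparr>carrier := K\<rparr>) (H\<lparr>carrier := h ` K\<rparr>)"
    using h subgroup.subset[OF K] unfolding hom_def by (auto simp: Pi_def subset_iff)
  interpret gh2: group_hom "G\<lparr>carrier := K\<rparr>" "H\<lparr>carrier := h ` K\<rparr>" h
    by (simp add: group_hom_def group_hom_axioms_def g1 g2 hh)
  show ?thesis using gh2.inj_hom_imp_solvable inj sol by simp
qed

lemma comm_solvable:
  assumes S: "subgroup S (GL3::'f::field m3 monoid)" and c: "\<forall>a\<in>S. \<forall>b\<in>S. a ** b = b ** a"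
  shows "solvable (GL3\<lparr>carrier := S\<rparr>)"
proof (rule solv_of_derived[OF GL3_group S, of 1])
  interpret G: group "GL3::'f m3 monoid" by (rule GL3_group)
  have "derived GL3 S \<subseteq> {\<one>\<^bsub>GL3\<^esub>}"
  proof (rule G.derived_sub)
    show "S \<subseteq> carrier GL3" using subgroup.subset[OF S] .
    show "subgroup {\<one>\<^bsub>GL3\<^esub>} (GL3::'f m3 monoid)" by (rule G.triv_subgroup)
    fix a b assume "a \<in> S" "b \<in> S"
    then show "a \<otimes>\<^bsub>GL3\<^esub> b \<otimes>\<^bsub>GL3\<^esub> inv\<^bsub>GL3\<^esub> a \<otimes>\<^bsub>GL3\<^esub> inv\<^bsub>GL3\<^esub> b \<in> {\<one>\<^bsub>GL3\<^esub>}"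
      using G.comm_commutator[of a b] c subgroup.subset[OF S] by auto
  qed
  moreover have "\<one>\<^bsub>GL3\<^esub> \<in> derived GL3 S"
    using subgroup.one_closed[OF G.derived_is_subgroup[OF subgroup.subset[OF S]]] .
  ultimately show "(derived GL3 ^^ 1) S = {\<one>\<^bsub>GL3\<^esub>}" by auto
qed

definition cnj :: "'f::field m3 \<Rightarrow> 'f m3 \<Rightarrow> 'f m3 \<Rightarrow> 'f m3" where
  "cnj Pv P s = Pv ** s ** P"

lemma cnj_hom:
  fixes P Pv :: "'f::field m3"
  assumes "Pv ** P = mat 1" "P ** Pv = mat 1"
  shows "cnj Pv P \<in> hom GL3 GL3" "inj (cnj Pv P)"
proof -
  have iP: "invertible P" "invertible Pv" using assms unfolding invertible_def by blast+
  show "cnj Pv P \<in> hom GL3 GL3"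
    unfolding hom_def
  proof (intro CollectI conjI ballI)
    show "cnj Pv P \<in> carrier GL3 \<rightarrow> carrier GL3"
      using iP by (auto simp: cnj_def intro!: invertible_mult)
    fix x y :: "'f m3"
    have "Pv ** (x ** y) ** P = Pv ** x ** (P ** Pv) ** y ** P"
      using assms by (simp add: matrix_mul_assoc)
    then show "cnj Pv P (x \<otimes>\<^bsub>GL3\<^esub> y) = cnj Pv P x \<otimes>\<^bsub>GL3\<^esub> cnj Pv P y"
      by (simp add: cnj_def matrix_mul_assoc)
  qed
  show "inj (cnj Pv P)"
  proof (rule injI)
    fix x y assume "cnj Pv P x = cnj Pv P y"
    then have "P ** (Pv ** x ** P) ** Pv = P ** (Pv ** y ** P) ** Pv" by (simp add: cnj_def)
    then show "x = y" using assms by (simp add: matrix_mul_assoc) (metis matrix_mul_assoc matrix_mul_rid)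
  qed
qed

lemma cnj_transfer:
  fixes P Pv :: "'f::field m3"
  assumes PP: "Pv ** P = mat 1" "P ** Pv = mat 1" and S: "subgroup S GL3"
  shows "subgroup (cnj Pv P ` S) GL3"
    "solvable (GL3\<lparr>carrier := cnj Pv P ` S\<rparr>) \<Longrightarrow> solvable (GL3\<lparr>carrier := S\<rparr>)"
proof -
  interpret gh: group_hom GL3 GL3 "cnj Pv P"
    by (simp add: group_hom_def group_hom_axioms_def GL3_group cnj_hom[OF PP])
  show "subgroup (cnj Pv P ` S) GL3" by (rule gh.subgroup_img_is_subgroup[OF S])
  show "solvable (GL3\<lparr>carrier := cnj Pv P ` S\<rparr>) \<Longrightarrow> solvable (GL3\<lparr>carrier := S\<rparr>)"
    using solv_transfer[OF GL3_group GL3_group cnj_hom(1)[OF PP] S] cnj_hom(2)[OF PP]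
    by (meson inj_on_subset subset_UNIV)
qed

definition cols :: "'f::field^3 \<Rightarrow> 'f^3 \<Rightarrow> 'f^3 \<Rightarrow> 'f m3" where
  "cols a b c = (\<chi> i j. if j = 1 then a$i else if j = 2 then b$i else c$i)"

lemma cols_mul: "cols a b c *v axis 1 1 = a" "cols a b c *v axis 2 1 = b" "cols a b c *v axis 3 1 = c"
  by (simp_all add: cols_def vec_eq_iff forall_3 matrix_vector_mult_def sum_3 axis_def)

lemma col_entry: "(A *v axis j 1)$i = A$i$(j::3)" for A :: "'f::field m3"
  using exhaust_3[of j] by (auto simp: matrix_vector_mult_def sum_3 axis_def)

lemma cols_det: "det (cols a b c) = a$1 * b$2 * c$3 + b$1 * c$2 * a$3 + c$1 * a$2 * b$3
   - a$1 * c$2 * b$3 - b$1 * a$2 * c$3 - c$1 * b$2 * a$3"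
  by (simp add: det_3 cols_def)

lemma inv_of_inv: "invertible (P::'f::field m3) \<Longrightarrow> \<exists>Pv. Pv ** P = mat 1 \<and> P ** Pv = mat 1"
  unfolding invertible_def by blast

lemma exP:
  fixes v :: "'f::field^3"
  assumes "v \<noteq> 0"
  shows "\<exists>P::'f m3. invertible P \<and> P *v axis 1 1 = v"
proof -
  have "v$1 \<noteq> 0 \<or> v$2 \<noteq> 0 \<or> v$3 \<noteq> 0" using assms by (auto simp: vec_eq_iff forall_3)
  then consider "v$1 \<noteq> 0" | "v$2 \<noteq> 0" | "v$3 \<noteq> 0" by blast
  then show ?thesis
  proof cases
    case 1
    have "invertible (cols v (axis 2 1) (axis 3 1))"
      using 1 by (simp add: invertible_det_nz cols_det axis_def)
    then show ?thesis using cols_mul by blast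
  next
    case 2
    have "invertible (cols v (axis 1 1) (axis 3 1))"
      using 2 by (simp add: invertible_det_nz cols_det axis_def)
    then show ?thesis using cols_mul by blast
  next
    case 3
    have "invertible (cols v (axis 1 1) (axis 2 1))"
      using 3 by (simp add: invertible_det_nz cols_det axis_def)
    then show ?thesis using cols_mul by blast
  qed
qed

lemma exQ:
  fixes w :: "'f::field^3"
  assumes "w$2 \<noteq> 0 \<or> w$3 \<noteq> 0"
  shows "\<exists>Q::'f m3. invertible Q \<and> Q *v axis 1 1 = axis 1 1 \<and> Q *v axis 2 1 = w"
proof -
  consider "w$2 \<noteq> 0" | "w$3 \<noteq> 0" using assms by blast
  then show ?thesis
  proof cases
    case 1
    have "invertible (cols (axis 1 1) w (axis 3 1))"
      using 1 by (simp add: invertible_det_nz cols_det axis_def)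
    then show ?thesis using cols_mul by blast
  next
    case 2
    have "invertible (cols (axis 1 1) w (axis 2 1))"
      using 2 by (simp add: invertible_det_nz cols_det axis_def)
    then show ?thesis using cols_mul by blast
  qed
qed



lemma mv_scale: "(A::'f::field m3) *v (c *s v) = c *s (A *v v)"
  by (simp add: vec_eq_iff forall_3 matrix_vector_mult_def sum_3 algebra_simps)

lemma case4:
  fixes t :: "'f::field m3"
  assumes S: "subgroup S (GL3::'f m3 monoid)" and lS: "\<forall>a\<in>S. lt0 a"
    and tc: "\<forall>a\<in>S. t ** a = a ** t" and nt: "\<not> lt0 t"
  shows "solvable (GL3\<lparr>carrier := S\<rparr>)"
proof -
  define e1 :: "'f^3" where "e1 = axis 1 1"
  define e2 :: "'f^3" where "e2 = axis 2 1"
  define w where "w = t *v e1"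
  have w23: "w$2 \<noteq> 0 \<or> w$3 \<noteq> 0" using nt by (simp add: w_def e1_def col_entry lt0_def)
  obtain Q where Q: "invertible Q" "Q *v e1 = e1" "Q *v e2 = w" using exQ[OF w23] e1_def e2_def by blast
  obtain Qi where Qi: "Qi ** Q = mat 1" "Q ** Qi = mat 1" using inv_of_inv[OF Q(1)] by blast
  have Qie: "Qi *v e1 = e1" "Qi *v w = e2"
    using Q Qi by (metis matrix_vector_mul_assoc matrix_vector_mul_lid)+
  have se1: "s *v e1 = s$1$1 *s e1" if "s \<in> S" for s
    using lS that by (simp add: e1_def vec_eq_iff forall_3 col_entry lt0_def; simp add: axis_def)
  have sw: "s *v w = s$1$1 *s w" if "s \<in> S" for s
  proof -
    have "s *v w = (s ** t) *v e1" by (simp add: w_def matrix_vector_mul_assoc)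
    also have "\<dots> = t *v (s *v e1)" using tc that by (simp add: matrix_vector_mul_assoc)
    also have "\<dots> = s$1$1 *s w" using se1[OF that] by (simp add: mv_scale w_def)
    finally show ?thesis .
  qed
  have ut: "\<forall>a\<in>cnj Qi Q ` S. ut a"
  proof
    fix a assume "a \<in> cnj Qi Q ` S"
    then obtain s where s: "s \<in> S" "a = Qi ** s ** Q" by (auto simp: cnj_def)
    have a1: "a *v e1 = s$1$1 *s e1"
      using s Q Qie se1[OF s(1)] by (simp add: mv_scale flip: matrix_vector_mul_assoc)
    have a2: "a *v e2 = s$1$1 *s e2"
      using s Q Qie sw[OF s(1)] by (simp add: mv_scale flip: matrix_vector_mul_assoc)
    have "(a *v e1)$2 = 0" "(a *v e1)$3 = 0" "(a *v e2)$3 = 0"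
      using a1 a2 by (simp_all add: e1_def e2_def axis_def)
    then show "ut a" by (simp add: ut_def lt0_def e1_def e2_def col_entry)
  qed
  show ?thesis
    using cnj_transfer[OF Qi S] UT_solvable[OF cnj_transfer(1)[OF Qi S] ut] by blast
qed

lemma main_lt0:
  assumes S: "subgroup S (GL3::'f::field m3 monoid)" and T: "subgroup T (GL3::'f::field m3 monoid)"
    and comm: "\<forall>a\<in>S. \<forall>b\<in>T. a ** b = b ** a" and lS: "\<forall>a\<in>S. lt0 a"
  shows "solvable (GL3\<lparr>carrier := S\<rparr>) \<or> solvable (GL3\<lparr>carrier := T\<rparr>)"
proof (cases "\<forall>b\<in>T. lt0 b")
  case True
  then show ?thesis using case3[OF S T comm lS] by blast
next
  case False
  then obtain t where t: "t \<in> T" "\<not> lt0 t" by blast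
  have tc: "\<forall>a\<in>S. t ** a = a ** t"
  proof
    fix a assume a: "a \<in> S"
    have "a ** t = t ** a" using comm a t(1) by blast
    then show "t ** a = a ** t" by (rule sym)
  qed
  show ?thesis using case4[OF S lS tc t(2)] by blast
qed

lemma main:
  assumes S: "subgroup S (GL3::'f::field m3 monoid)" and T: "subgroup T (GL3::'f::field m3 monoid)"
    and comm: "\<forall>a\<in>S. \<forall>b\<in>T. a ** b = b ** a"
  shows "solvable (GL3\<lparr>carrier := S\<rparr>) \<or> solvable (GL3\<lparr>carrier := T\<rparr>)"
proof (cases "\<exists>v. ceig S v")
  case False
  have "cm S t" if tT: "t \<in> T" for t
    unfolding cm_def
  proof
    fix a assume a: "a \<in> S"
    have "a ** t = t ** a" using comm a tT by blast
    then show "t ** a = a ** t" by (rule sym)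
  qed
  then have "\<forall>a\<in>T. \<forall>b\<in>T. a ** b = b ** a" using div_comm[OF False] by blast
  then show ?thesis using comm_solvable[OF T] by blast
next
  case True
  then obtain v where v: "ceig S v" by blast
  obtain P :: "'f m3" where P: "invertible P" "P *v axis 1 1 = v" using exP v ceig_def by blast
  obtain Pv where Pv: "Pv ** P = mat 1" "P ** Pv = mat 1" using inv_of_inv[OF P(1)] by blast
  have Pve: "Pv *v v = axis 1 1" using P Pv by (metis matrix_vector_mul_assoc matrix_vector_mul_lid)
  have S': "subgroup (cnj Pv P ` S) GL3" and T': "subgroup (cnj Pv P ` T) GL3"
    using cnj_transfer[OF Pv S] cnj_transfer[OF Pv T] by blast+
  have comm': "\<forall>a\<in>cnj Pv P ` S. \<forall>b\<in>cnj Pv P ` T. a ** b = b ** a"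
  proof (intro ballI)
    fix a b assume "a \<in> cnj Pv P ` S" "b \<in> cnj Pv P ` T"
    then obtain s t where st: "s \<in> S" "t \<in> T" "a = Pv ** s ** P" "b = Pv ** t ** P" by (auto simp: cnj_def)
    have "a ** b = Pv ** (s ** (P ** Pv) ** t) ** P" using st by (simp add: matrix_mul_assoc)
    also have "\<dots> = Pv ** (s ** t) ** P" using Pv by (simp add: matrix_mul_assoc)
    also have "\<dots> = Pv ** (t ** s) ** P" using comm st by metis
    also have "\<dots> = Pv ** (t ** (P ** Pv) ** s) ** P" using Pv by (simp add: matrix_mul_assoc)
    also have "\<dots> = b ** a" using st by (simp add: matrix_mul_assoc)
    finally show "a ** b = b ** a" .
  qed
  have l: "\<forall>a\<in>cnj Pv P ` S. lt0 a"
  proof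
    fix a assume "a \<in> cnj Pv P ` S"
    then obtain s where s: "s \<in> S" "a = Pv ** s ** P" by (auto simp: cnj_def)
    obtain c where c: "s *v v = c *s v" using v s(1) ceig_def by blast
    have "a *v axis 1 1 = c *s axis 1 1"
      using s c P Pve by (simp add: mv_scale flip: matrix_vector_mul_assoc)
    then have "(a *v axis 1 1)$2 = 0" "(a *v axis 1 1)$3 = 0" by (simp_all add: axis_def)
    then show "lt0 a" by (simp add: lt0_def col_entry)
  qed
  show ?thesis using main_lt0[OF S' T' comm' l] cnj_transfer(2)[OF Pv S] cnj_transfer(2)[OF Pv T] by blast
qed

lemma (in group) gen_comm:
  assumes X: "X \<subseteq> carrier G" and b: "b \<in> carrier G" and c: "\<forall>x\<in>X. x \<otimes> b = b \<otimes> x"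
    and y: "y \<in> generate G X"
  shows "y \<otimes> b = b \<otimes> y"
  using y
proof (induction rule: generate.induct)
  case one then show ?case using b by simp
next
  case (incl h) then show ?case using c by blast
next
  case (inv h)
  have h: "h \<in> carrier G" using inv X by blast
  have "inv h \<otimes> b = inv h \<otimes> (b \<otimes> h) \<otimes> inv h"
    using h b by (simp add: m_assoc)
  also have "\<dots> = inv h \<otimes> (h \<otimes> b) \<otimes> inv h" using c inv by simp
  also have "\<dots> = b \<otimes> inv h" using h b by (simp add: m_assoc [symmetric])
  finally show ?case .
next
  case (eng h1 h2)
  have h: "h1 \<in> carrier G" "h2 \<in> carrier G" using eng generate_in_carrier[OF X] by blast+
  have "h1 \<otimes> h2 \<otimes> b = h1 \<otimes> (b \<otimes> h2)" using eng h b by (simp add: m_assoc)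
  also have "\<dots> = (h1 \<otimes> b) \<otimes> h2" using h b by (simp add: m_assoc)
  also have "\<dots> = b \<otimes> (h1 \<otimes> h2)" using eng h b by (simp add: m_assoc)
  finally show ?case .
qed



theorem theorem2p3:
  fixes G :: "('g, 'b) monoid_scheme" and A B C D :: 'g
  assumes "group G"
    and "A \<in> carrier G" "B \<in> carrier G" "C \<in> carrier G" "D \<in> carrier G"
    and "A \<otimes>\<^bsub>G\<^esub> B = B \<otimes>\<^bsub>G\<^esub> A"
    and "B \<otimes>\<^bsub>G\<^esub> C = C \<otimes>\<^bsub>G\<^esub> B"
    and "C \<otimes>\<^bsub>G\<^esub> D = D \<otimes>\<^bsub>G\<^esub> C"
    and "D \<otimes>\<^bsub>G\<^esub> A = A \<otimes>\<^bsub>G\<^esub> D"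
    and "\<not> solvable (G\<lparr>carrier := generate G {A, C}\<rparr>)"
    and "\<not> solvable (G\<lparr>carrier := generate G {B, D}\<rparr>)"
  shows "\<not> embeds_in G (GL3 :: ('f::field ^ 3 ^ 3) monoid)"
proof
  assume "embeds_in G (GL3 :: ('f::field ^ 3 ^ 3) monoid)"
  then obtain h where h: "h \<in> hom G (GL3 :: 'f m3 monoid)" "inj_on h (carrier G)"
    unfolding embeds_in_def by blast
  interpret G: group G by fact
  interpret gh: group_hom G "GL3 :: 'f m3 monoid" h
    by (simp add: group_hom_def group_hom_axioms_def GL3_group h(1) assms(1))
  define H1 where "H1 = generate G {A, C}"
  define H2 where "H2 = generate G {B, D}"
  have X1: "{A, C} \<subseteq> carrier G" and X2: "{B, D} \<subseteq> carrier G" using assms by auto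
  have H1: "subgroup H1 G" unfolding H1_def by (rule G.generate_is_subgroup[OF X1])
  have H2: "subgroup H2 G" unfolding H2_def by (rule G.generate_is_subgroup[OF X2])
  have c1: "\<forall>x\<in>H1. x \<otimes>\<^bsub>G\<^esub> b = b \<otimes>\<^bsub>G\<^esub> x" if "b \<in> {B, D}" for b
  proof
    fix x assume x: "x \<in> H1"
    have b: "b \<in> carrier G" using that assms by auto
    have "\<forall>z\<in>{A, C}. z \<otimes>\<^bsub>G\<^esub> b = b \<otimes>\<^bsub>G\<^esub> z" using that assms(6-9) by auto
    then show "x \<otimes>\<^bsub>G\<^esub> b = b \<otimes>\<^bsub>G\<^esub> x" using G.gen_comm[OF X1 b _ x[unfolded H1_def]] by blast
  qed
  have comm: "x \<otimes>\<^bsub>G\<^esub> y = y \<otimes>\<^bsub>G\<^esub> x" if x: "x \<in> H1" and y: "y \<in> H2" for x y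
  proof -
    have xc: "x \<in> carrier G" using x subgroup.subset[OF H1] by blast
    have "\<forall>z\<in>{B, D}. z \<otimes>\<^bsub>G\<^esub> x = x \<otimes>\<^bsub>G\<^esub> z" using c1 x by (metis)
    then have "y \<otimes>\<^bsub>G\<^esub> x = x \<otimes>\<^bsub>G\<^esub> y" using G.gen_comm[OF X2 xc _ y[unfolded H2_def]] by blast
    then show ?thesis by (rule sym)
  qed
  have S: "subgroup (h ` H1) (GL3 :: 'f m3 monoid)" by (rule gh.subgroup_img_is_subgroup[OF H1])
  have T: "subgroup (h ` H2) (GL3 :: 'f m3 monoid)" by (rule gh.subgroup_img_is_subgroup[OF H2])
  have commST: "\<forall>a\<in>h ` H1. \<forall>b\<in>h ` H2. a ** b = b ** a"
  proof (intro ballI)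
    fix a b assume "a \<in> h ` H1" "b \<in> h ` H2"
    then obtain x y where xy: "x \<in> H1" "y \<in> H2" "a = h x" "b = h y" by blast
    have xc: "x \<in> carrier G" "y \<in> carrier G" using xy subgroup.subset[OF H1] subgroup.subset[OF H2] by blast+
    have "a ** b = h (x \<otimes>\<^bsub>G\<^esub> y)" using xy xc by simp
    also have "\<dots> = h (y \<otimes>\<^bsub>G\<^esub> x)" using comm[OF xy(1,2)] by simp
    also have "\<dots> = b ** a" using xy xc by simp
    finally show "a ** b = b ** a" .
  qed
  have "solvable (GL3\<lparr>carrier := h ` H1\<rparr>) \<or> solvable ((GL3 :: 'f m3 monoid)\<lparr>carrier := h ` H2\<rparr>)"
    by (rule main[OF S T commST])
  moreover have "solvable (GL3\<lparr>carrier := h ` H1\<rparr>) \<Longrightarrow> solvable (G\<lparr>carrier := H1\<rparr>)"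
    using solv_transfer[OF assms(1) GL3_group h(1) H1] h(2) subgroup.subset[OF H1] inj_on_subset by blast
  moreover have "solvable ((GL3 :: 'f m3 monoid)\<lparr>carrier := h ` H2\<rparr>) \<Longrightarrow> solvable (G\<lparr>carrier := H2\<rparr>)"
    using solv_transfer[OF assms(1) GL3_group h(1) H2] h(2) subgroup.subset[OF H2] inj_on_subset by blast
  ultimately show False using assms(10,11) H1_def H2_def by blast
qed


end
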